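(* Let $\mathcal{F}$ be a hypothesis class of functions $\mathcal{X}\to\{\pm1\}$ with finite VC dimension $d$, and $\mathcal{P}$ an unknown distribution on $\mathcal{X}\times\{\pm1\}$. Consider a run of Active-ILESS with accuracy parameter $\epsilon>0$ and confidence $\delta$, suppose the event $\mathcal{K}$ occurred, and suppose the run terminated because of the $\epsilon$ condition. Then the returned hypothesis $\hat f$ satisfies $R_{\mathcal{P}}(\hat f)\le R_{\mathcal{P}}(f^* )+\epsilon$, where $f^*$ is a true risk minimizer of $\mathcal{P}$.
   Context: $R_{\mathcal{P}}(f)=\Pr_{\mathcal{P}}[f(X)\ne Y]$; $\hat R(f,S)$ is the fraction of examples of $S$ misclassified by $f$; $f^*$ is any minimizer of $R_{\mathcal P}$ over $\mathcal{F}$. Slacks: for $n>0$, $\delta'\in(0,1)$, $A=4d\ln\frac{16ne}{d\delta'}$, $\hat\sigma_{R-\hat R}(n,\delta',d,\hat r)=\frac{A}{n}+\sqrt{\frac{A}{n}\hat r}$, $\bar\sigma_{R-\hat R}(n,\delta',d,r)=\sqrt{\frac{A}{n}r}$, $\bar\sigma_{\hat R-R}(n,\delta',d,r)=\frac{A}{n}+\sqrt{\frac{A}{n}r}$, $\hat\sigma_{\hat R-R}(n,\delta',d,\hat r)=\sqrt{\frac{A}{n}\hat r}$, $\sigma_{R-\hat R}=\min\{\hat\sigma_{R-\hat R}(\cdot,\hat r),\bar\sigma_{R-\hat R}(\cdot,r)\}$, $\sigma_{\hat R-R}=\min\{\bar\sigma_{\hat R-R}(\cdot,r),\hat\sigma_{\hat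 R-R}(\cdot,\hat r)\}$. $AGR(G)=\{x:\text{all }f\in G\text{ agree on }x\}$. Active-ILESS (inputs: $\epsilon$ and/or budget $m$, confidence $\delta$, $\mathcal{F}$, $d$, i.i.d. stream $x_1,x_2,\dots$ from $\mathcal{P}$): initialize $\hat S=\emptyset$, $G_0=\mathcal{F}$, $t=1$; for each $x_t$: if $x_t\in AGR(G_{t-1})$ do not request its label and set $y_t=f(x_t)$ for any $f\in G_{t-1}$, otherwise request the true label $y_t$; add $(x_t,y_t)$ to $\hat S$; let $\hat f$ be an ERM on $\hat S$; if $\log_2t\in\mathbb{N}$: set $\sigma_{\rm Active}=\hat\sigma_{R-\hat R}(\tfrac t2,\tfrac\delta{2t},d,\hat R(\hat f,\hat S))+\bar\sigma_{\hat R-R}\big(\tfrac t2,\tfrac\delta{2t},d,\hat R(\hat f,\hat S)+\hat\sigma_{R-\hat R}(\tfrac t2,\tfrac\delta{2t},d,\hat R(\hat f,\hat S))\big)$, terminate returning $\hat f$ if $\epsilon$ was given and $\sigma_{\rm Active}<\epsilon$ (the "$\epsilon$ condition"), set $G_t=\{f:\hat R(f,\hat S)\le\hat R(\hat f,\hat S)+\sigma_{\rm Active}\}$ and reset $\hat S=\emptyset$; otherwise $G_t=G_{t-1}$; if $m$ was given and $t=m$ terminate returning $\hat f$; increment $t$. For $G\subseteq\mathcal{F}$, $\mathcal{P}(G)$ is the distribution of $(X,Y')$ with $(X,Y)\sim\mathcal{P}$, $Y'$ = common value of $G$ at $X$ if $X\in AGR(G)$ and $Y'=Y$ otherwise; $R_{\mathcal{P}(G)}(f)=\Pr[f(X)\ne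 Y']$. Event $\mathcal{K}$: for every $t=2^i$ reached and every $f\in\mathcal{F}$, with $\hat R(f)=\hat R(f,\hat S)$ for $\hat S$ at iteration $t$ before reset, $R_{\mathcal{P}(G_{t-1})}(f)\le\hat R(f)+\sigma_{R-\hat R}(\tfrac t2,\tfrac\delta{2t},d,R_{\mathcal{P}(G_{t-1})}(f),\hat R(f))$ and $\hat R(f)\le R_{\mathcal{P}(G_{t-1})}(f)+\sigma_{\hat R-R}(\tfrac t2,\tfrac\delta{2t},d,R_{\mathcal{P}(G_{t-1})}(f),\hat R(f))$. *)

theory Defs
  imports "HOL-Probability.Probability_Measure"
begin

(* Labels {+1,-1} are represented by bool (True = +1, False = -1). *)

definition shatters :: "('a \<Rightarrow> bool) set \<Rightarrow> 'a set \<Rightarrow> bool" where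
  "shatters F C \<longleftrightarrow> (\<forall>B \<subseteq> C. \<exists>f\<in>F. \<forall>x\<in>C. f x = (x \<in> B))"

definition VC_dim :: "('a \<Rightarrow> bool) set \<Rightarrow> nat \<Rightarrow> bool" where
  "VC_dim F d \<longleftrightarrow>
     (\<exists>C. finite C \<and> card C = d \<and> shatters F C) \<and>
     (\<forall>C. finite C \<and> shatters F C \<longrightarrow> card C \<le> d)"

definition AGR :: "('a \<Rightarrow> bool) set \<Rightarrow> 'a set" where
  "AGR G = {x. \<forall>f\<in>G. \<forall>g\<in>G. f x = g x}"

text \<open>The label Y' of the distribution P(G): common value of G on AGR(G), true label otherwise.\<close>
definition relab :: "('a \<Rightarrow> bool) set \<Rightarrow> 'a \<Rightarrow> bool \<Rightarrow> bool" where
  "relab G x y = (if x \<in> AGR G then (SOME f. f \<in> G) x else y)"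

definition risk :: "('a \<times> bool) measure \<Rightarrow> ('a \<Rightarrow> bool) \<Rightarrow> real" where
  "risk M f = measure M {p \<in> space M. f (fst p) \<noteq> snd p}"

definition risk_rel :: "('a \<times> bool) measure \<Rightarrow> ('a \<Rightarrow> bool) set \<Rightarrow> ('a \<Rightarrow> bool) \<Rightarrow> real" where
  "risk_rel M G f = measure M {p \<in> space M. f (fst p) \<noteq> relab G (fst p) (snd p)}"

definition emp_err :: "('a \<Rightarrow> bool) \<Rightarrow> ('a \<times> bool) list \<Rightarrow> real" where
  "emp_err f S = real (length (filter (\<lambda>p. f (fst p) \<noteq> snd p) S)) / real (length S)"

definition is_ERM :: "('a \<Rightarrow> bool) set \<Rightarrow> ('a \<times> bool) list \<Rightarrow> ('a \<Rightarrow> bool) \<Rightarrow> bool" where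
  "is_ERM F S f \<longleftrightarrow> f \<in> F \<and> (\<forall>g\<in>F. emp_err f S \<le> emp_err g S)"

definition slackA :: "real \<Rightarrow> real \<Rightarrow> nat \<Rightarrow> real" where
  "slackA n \<delta>' d = 4 * real d * ln (16 * n * exp 1 / (real d * \<delta>'))"

definition sig_hat_RmR :: "real \<Rightarrow> real \<Rightarrow> nat \<Rightarrow> real \<Rightarrow> real" where
  "sig_hat_RmR n \<delta>' d rh = slackA n \<delta>' d / n + sqrt (slackA n \<delta>' d / n * rh)"

definition sig_bar_RmR :: "real \<Rightarrow> real \<Rightarrow> nat \<Rightarrow> real \<Rightarrow> real" where
  "sig_bar_RmR n \<delta>' d r = sqrt (slackA n \<delta>' d / n * r)"

definition sig_bar_RhmR :: "real \<Rightarrow> real \<Rightarrow> nat \<Rightarrow> real \<Rightarrow> real" where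
  "sig_bar_RhmR n \<delta>' d r = slackA n \<delta>' d / n + sqrt (slackA n \<delta>' d / n * r)"

definition sig_hat_RhmR :: "real \<Rightarrow> real \<Rightarrow> nat \<Rightarrow> real \<Rightarrow> real" where
  "sig_hat_RhmR n \<delta>' d rh = sqrt (slackA n \<delta>' d / n * rh)"

definition sig_RmR :: "real \<Rightarrow> real \<Rightarrow> nat \<Rightarrow> real \<Rightarrow> real \<Rightarrow> real" where
  "sig_RmR n \<delta>' d r rh = min (sig_hat_RmR n \<delta>' d rh) (sig_bar_RmR n \<delta>' d r)"

definition sig_RhmR :: "real \<Rightarrow> real \<Rightarrow> nat \<Rightarrow> real \<Rightarrow> real \<Rightarrow> real" where
  "sig_RhmR n \<delta>' d r rh = min (sig_bar_RhmR n \<delta>' d r) (sig_hat_RhmR n \<delta>' d rh)"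

definition sigma_active :: "nat \<Rightarrow> real \<Rightarrow> nat \<Rightarrow> real \<Rightarrow> real" where
  "sigma_active t \<delta> d rh =
     (let n = real t / 2; \<delta>' = \<delta> / (2 * real t)
      in sig_hat_RmR n \<delta>' d rh + sig_bar_RhmR n \<delta>' d (rh + sig_hat_RmR n \<delta>' d rh))"

definition is_pow2 :: "nat \<Rightarrow> bool" where
  "is_pow2 t \<longleftrightarrow> (\<exists>i. t = 2 ^ i)"

text \<open>A run is determined by the realised stream xs t, the true labels ys t (t \<ge> 1), and the
  ERM selected at iteration t, given as sel t S' for the current sample S'.
  iless_state ... t = (G_t, Shat after iteration t).\<close>

primrec iless_state ::
  "('a \<Rightarrow> bool) set \<Rightarrow> nat \<Rightarrow> real \<Rightarrow> (nat \<Rightarrow> ('a \<times> bool) list \<Rightarrow> ('a \<Rightarrow> bool)) \<Rightarrow>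
   (nat \<Rightarrow> 'a) \<Rightarrow> (nat \<Rightarrow> bool) \<Rightarrow> nat \<Rightarrow> ('a \<Rightarrow> bool) set \<times> ('a \<times> bool) list" where
  "iless_state F d \<delta> sel xs ys 0 = (F, [])"
| "iless_state F d \<delta> sel xs ys (Suc k) =
     (let G = fst (iless_state F d \<delta> sel xs ys k);
          S' = snd (iless_state F d \<delta> sel xs ys k) @ [(xs (Suc k), relab G (xs (Suc k)) (ys (Suc k)))];
          fh = sel (Suc k) S'
      in if is_pow2 (Suc k)
         then ({f \<in> F. emp_err f S' \<le> emp_err fh S' + sigma_active (Suc k) \<delta> d (emp_err fh S')}, [])
         else (G, S'))"

definition iless_G where
  "iless_G F d \<delta> sel xs ys t = fst (iless_state F d \<delta> sel xs ys t)"

text \<open>The sample Shat at iteration t (t \<ge> 1), after adding (x_t,y_t) and before any reset.\<close>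
definition iless_sample where
  "iless_sample F d \<delta> sel xs ys t =
     snd (iless_state F d \<delta> sel xs ys (t - 1)) @
       [(xs t, relab (iless_G F d \<delta> sel xs ys (t - 1)) (xs t) (ys t))]"

definition iless_fhat where
  "iless_fhat F d \<delta> sel xs ys t = sel t (iless_sample F d \<delta> sel xs ys t)"

definition eps_cond where
  "eps_cond \<epsilon> F d \<delta> sel xs ys t \<longleftrightarrow> is_pow2 t \<and>
     sigma_active t \<delta> d (emp_err (iless_fhat F d \<delta> sel xs ys t) (iless_sample F d \<delta> sel xs ys t)) < \<epsilon>"

definition event_K where
  "event_K M F d \<delta> sel xs ys T \<longleftrightarrow>
     (\<forall>t. 1 \<le> t \<and> t \<le> T \<and> is_pow2 t \<longrightarrow>
        (\<forall>f\<in>F.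
          let r = risk_rel M (iless_G F d \<delta> sel xs ys (t - 1)) f;
              rh = emp_err f (iless_sample F d \<delta> sel xs ys t);
              n = real t / 2; \<delta>' = \<delta> / (2 * real t)
          in r \<le> rh + sig_RmR n \<delta>' d r rh \<and> rh \<le> r + sig_RhmR n \<delta>' d r rh))"

end

theory Submission
  imports Defs
begin

lemma sqrt_nonpos_aux: "a < 0 \<Longrightarrow> (x::real) \<ge> 0 \<Longrightarrow> sqrt (a * x) \<le> 0"
  by (simp add: mult_nonpos_nonneg)

lemma K_a_nonneg:
  assumes "(r::real) \<le> rh + sig_RmR n e d r rh" "rh \<le> r + sig_RhmR n e d r rh"
    "0 \<le> r" "0 \<le> rh"
  shows "0 \<le> slackA n e d / n"
proof (rule ccontr)
  let ?a = "slackA n e d / n"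
  assume "\<not> 0 \<le> ?a"
  hence a: "?a < 0" by simp
  have "r \<le> rh + ?a + sqrt (?a * rh)" using assms(1)
    unfolding sig_RmR_def sig_hat_RmR_def by linarith
  moreover have "rh \<le> r + ?a + sqrt (?a * r)" using assms(2)
    unfolding sig_RhmR_def sig_bar_RhmR_def by linarith
  moreover have "sqrt (?a * rh) \<le> 0" "sqrt (?a * r) \<le> 0"
    using sqrt_nonpos_aux[OF a] assms(3,4) by auto
  ultimately show False using a by linarith
qed

lemma sqrt_mono_aux: "0 \<le> (a::real) \<Longrightarrow> x \<le> y \<Longrightarrow> sqrt (a*x) \<le> sqrt (a*y)"
  by (simp add: mult_left_mono)

lemma emp_err_nonneg: "0 \<le> emp_err f S"
  unfolding emp_err_def by simp

lemma risk_diff: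
  assumes M: "prob_space M" and g: "g \<in> G"
    and m1: "{p \<in> space M. f (fst p) \<noteq> snd p} \<in> sets M"
    and m2: "{p \<in> space M. g (fst p) \<noteq> snd p} \<in> sets M"
    and m3: "{p \<in> space M. f (fst p) \<noteq> relab G (fst p) (snd p)} \<in> sets M"
    and m4: "{p \<in> space M. g (fst p) \<noteq> relab G (fst p) (snd p)} \<in> sets M"
  shows "risk M f - risk M g \<le> risk_rel M G f - risk_rel M G g"
proof -
  interpret prob_space M by fact
  define A where "A = {p \<in> space M. f (fst p) \<noteq> snd p}"
  define B where "B = {p \<in> space M. g (fst p) \<noteq> snd p}"
  define C where "C = {p \<in> space M. f (fst p) \<noteq> relab G (fst p) (snd p)}"
  define D where "D = {p \<in> space M. g (fst p) \<noteq> relab G (fst p) (snd p)}"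
  have s: "A \<in> sets M" "B \<in> sets M" "C \<in> sets M" "D \<in> sets M"
    using m1 m2 m3 m4 by (auto simp: A_def B_def C_def D_def)
  have pw: "indicator A x + indicator D x \<le> (indicator C x + indicator B x :: real)" for x
  proof (cases "x \<in> space M")
    case False thus ?thesis by (simp add: A_def B_def C_def D_def indicator_def)
  next
    case True
    show ?thesis
    proof (cases "fst x \<in> AGR G")
      case True
      have sg: "(SOME f. f \<in> G) \<in> G" by (rule someI[where P="\<lambda>f. f \<in> G", OF g])
      have "(SOME f. f \<in> G) (fst x) = g (fst x)"
        using True sg g unfolding AGR_def mem_Collect_eq by (rule_tac ballE) fast+
      hence "relab G (fst x) (snd x) = g (fst x)" using True unfolding relab_def by simp
      thus ?thesis using \<open>x \<in> space M\<close>
        by (auto simp: A_def B_def C_def D_def indicator_def)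
    next
      case False
      thus ?thesis using \<open>x \<in> space M\<close>
        by (auto simp: A_def B_def C_def D_def indicator_def relab_def)
    qed
  qed
  have ii: "integrable M (indicator X :: _ \<Rightarrow> real)" if "X \<in> sets M" for X
    using that by (simp add: integrable_indicator_iff emeasure_eq_measure)
  have iv: "integral\<^sup>L M (indicator X :: _ \<Rightarrow> real) = measure M X" if "X \<in> sets M" for X
    using that by simp
  have "integral\<^sup>L M (\<lambda>x. indicator A x + indicator D x :: real)
        \<le> integral\<^sup>L M (\<lambda>x. indicator C x + indicator B x :: real)"
    by (rule integral_mono) (use pw ii s in auto)
  hence "measure M A + measure M D \<le> measure M C + measure M B"
    using s ii iv by (simp add: Bochner_Integration.integral_add)
  thus ?thesis unfolding risk_def risk_rel_def A_def B_def C_def D_def by linarith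
qed

theorem lemma12:
  fixes M :: "('a \<times> bool) measure" and F :: "('a \<Rightarrow> bool) set" and d :: nat
    and \<epsilon> \<delta> :: real and sel :: "nat \<Rightarrow> ('a \<times> bool) list \<Rightarrow> ('a \<Rightarrow> bool)"
    and xs :: "nat \<Rightarrow> 'a" and ys :: "nat \<Rightarrow> bool" and T :: nat and fstar :: "'a \<Rightarrow> bool"
  assumes "prob_space M"
    and "VC_dim F d"
    and "\<forall>f\<in>F. {p \<in> space M. f (fst p) \<noteq> snd p} \<in> sets M"
    and "\<forall>t. 1 \<le> t \<and> t \<le> T \<longrightarrow> (\<forall>f\<in>F.
           {p \<in> space M. f (fst p) \<noteq> relab (iless_G F d \<delta> sel xs ys (t - 1)) (fst p) (snd p)} \<in> sets M)"
    and "\<epsilon> > 0" and "0 < \<delta>" and "\<delta> < 1"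
    and "\<forall>t. 1 \<le> t \<and> t \<le> T \<longrightarrow>
           is_ERM F (iless_sample F d \<delta> sel xs ys t) (iless_fhat F d \<delta> sel xs ys t)"
    and "1 \<le> T"
    and "eps_cond \<epsilon> F d \<delta> sel xs ys T"
    and "\<forall>t. 1 \<le> t \<and> t < T \<longrightarrow> \<not> eps_cond \<epsilon> F d \<delta> sel xs ys t"
    and "event_K M F d \<delta> sel xs ys T"
    and "fstar \<in> F" and "\<forall>f\<in>F. risk M fstar \<le> risk M f"
  shows "risk M (iless_fhat F d \<delta> sel xs ys T) \<le> risk M fstar + \<epsilon>"
proof -
  note M = assms(1)
  define G where "G t = iless_G F d \<delta> sel xs ys t" for t
  define S where "S t = iless_sample F d \<delta> sel xs ys t" for t
  define fh where "fh t = iless_fhat F d \<delta> sel xs ys t" for t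
  define a where "a t = slackA (real t / 2) (\<delta> / (2 * real t)) d / (real t / 2)" for t :: nat
  define R where "R t f = risk_rel M (G (t - 1)) f" for t f
  have rnn: "0 \<le> R t f" for t f unfolding R_def risk_rel_def by simp
  have K: "R t f \<le> emp_err f (S t) + a t + sqrt (a t * emp_err f (S t))
         \<and> emp_err f (S t) \<le> R t f + a t + sqrt (a t * R t f) \<and> 0 \<le> a t"
    if t: "1 \<le> t" "t \<le> T" "is_pow2 t" and f: "f \<in> F" for t f
  proof -
    have k: "R t f \<le> emp_err f (S t) + sig_RmR (real t / 2) (\<delta> / (2 * real t)) d (R t f) (emp_err f (S t))
      \<and> emp_err f (S t) \<le> R t f + sig_RhmR (real t / 2) (\<delta> / (2 * real t)) d (R t f) (emp_err f (S t))"
      using assms(12) t f unfolding event_K_def R_def G_def S_def Let_def by blast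
    have a0: "0 \<le> a t" unfolding a_def
      by (rule K_a_nonneg) (use k rnn emp_err_nonneg in auto)
    show ?thesis using k a0
      unfolding sig_RmR_def sig_RhmR_def sig_hat_RmR_def sig_bar_RhmR_def a_def by auto
  qed
  have sa: "sigma_active t \<delta> d r = a t + sqrt (a t * r) + a t + sqrt (a t * (r + a t + sqrt (a t * r)))"
    for t r unfolding sigma_active_def sig_hat_RmR_def sig_bar_RhmR_def a_def Let_def
    by (simp add: add.assoc)
  have fhF: "fh t \<in> F" and fhmin: "\<forall>g\<in>F. emp_err (fh t) (S t) \<le> emp_err g (S t)"
    if "1 \<le> t" "t \<le> T" for t
    using assms(8) that unfolding is_ERM_def fh_def S_def by auto
  have dif: "risk M f - risk M fstar \<le> R t f - R t fstar"
    if "1 \<le> t" "t \<le> T" "f \<in> F" "fstar \<in> G (t - 1)" for t f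
    unfolding R_def
    by (rule risk_diff[OF M that(4)]) (use assms(3,4,13) that in \<open>auto simp: G_def\<close>)
  have inG: "k \<le> T - 1 \<Longrightarrow> fstar \<in> G k" for k
  proof (induction k)
    case 0 thus ?case using assms(13) by (simp add: G_def iless_G_def)
  next
    case (Suc k)
    hence IH: "fstar \<in> G k" by simp
    define t where "t = Suc k"
    have t1: "1 \<le> t" "t \<le> T" using Suc.prems unfolding t_def by auto
    have Sdef: "S t = snd (iless_state F d \<delta> sel xs ys k) @
        [(xs (Suc k), relab (fst (iless_state F d \<delta> sel xs ys k)) (xs (Suc k)) (ys (Suc k)))]"
      unfolding S_def iless_sample_def iless_G_def t_def by simp
    have fhdef: "fh t = sel (Suc k) (S t)" unfolding fh_def iless_fhat_def S_def t_def by simp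
    show ?case
    proof (cases "is_pow2 t")
      case False
      thus ?thesis using IH unfolding G_def iless_G_def t_def by (simp add: Let_def)
    next
      case True
      have Gt: "G t = {f \<in> F. emp_err f (S t) \<le> emp_err (fh t) (S t)
          + sigma_active t \<delta> d (emp_err (fh t) (S t))}"
      proof -
        have P: "is_pow2 (Suc k)" using True by (simp add: t_def)
        have "G t = fst (iless_state F d \<delta> sel xs ys (Suc k))" by (simp add: G_def iless_G_def t_def)
        also have "\<dots> = {f \<in> F. emp_err f (S t) \<le> emp_err (sel (Suc k) (S t)) (S t)
          + sigma_active (Suc k) \<delta> d (emp_err (sel (Suc k) (S t)) (S t))}"
          unfolding Sdef by (simp only: iless_state.simps Let_def P if_True fst_conv)
        finally show ?thesis using fhdef t_def by simp
      qed
      let ?r = "emp_err (fh t) (S t)" and ?rs = "emp_err fstar (S t)"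
      have Kf: "R t (fh t) \<le> ?r + a t + sqrt (a t * ?r)" "0 \<le> a t"
        using K[OF t1 True fhF[OF t1]] by auto
      have Ks: "?rs \<le> R t fstar + a t + sqrt (a t * R t fstar)"
        using K[OF t1 True assms(13)] by auto
      have "risk M (fh t) - risk M fstar \<le> R t (fh t) - R t fstar"
        by (rule dif[OF t1 fhF[OF t1]]) (use IH t_def in simp)
      moreover have "risk M fstar \<le> risk M (fh t)" using assms(14) fhF[OF t1] by auto
      ultimately have le: "R t fstar \<le> R t (fh t)" by linarith
      have "sqrt (a t * R t fstar) \<le> sqrt (a t * (?r + a t + sqrt (a t * ?r)))"
        using sqrt_mono_aux[OF Kf(2)] le Kf(1) by (meson order_trans)
      hence "?rs \<le> ?r + sigma_active t \<delta> d ?r" unfolding sa using Ks Kf le by linarith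
      hence "fstar \<in> G t" unfolding Gt using assms(13) by simp
      thus ?thesis by (simp add: t_def)
    qed
  qed
  have T1: "1 \<le> T" "T \<le> T" using assms(9) by auto
  have pT: "is_pow2 T" and eT: "sigma_active T \<delta> d (emp_err (fh T) (S T)) < \<epsilon>"
    using assms(10) unfolding eps_cond_def fh_def S_def by auto
  let ?r = "emp_err (fh T) (S T)" and ?rs = "emp_err fstar (S T)"
  let ?U = "?r + a T + sqrt (a T * ?r)"
  have Kf: "R T (fh T) \<le> ?U" "0 \<le> a T" using K[OF T1 pT fhF[OF T1]] by auto
  have Ks: "?rs \<le> R T fstar + a T + sqrt (a T * R T fstar)"
    using K[OF T1 pT assms(13)] by auto
  have rr: "?r \<le> ?rs" using fhmin[OF T1] assms(13) by auto
  have d: "risk M (fh T) - risk M fstar \<le> R T (fh T) - R T fstar"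
    by (rule dif[OF T1 fhF[OF T1] inG]) simp
  have r0: "0 \<le> ?r" by (rule emp_err_nonneg)
  have s1: "0 \<le> sqrt (a T * ?r)" using Kf(2) r0 by simp
  have s2: "0 \<le> sqrt (a T * ?U)" using Kf(2) r0 s1 by simp
  have "R T (fh T) - R T fstar \<le> sigma_active T \<delta> d ?r"
  proof (cases "R T fstar \<le> ?U")
    case True
    hence "sqrt (a T * R T fstar) \<le> sqrt (a T * ?U)" by (rule sqrt_mono_aux[OF Kf(2)])
    thus ?thesis unfolding sa using Kf Ks rr by linarith
  next
    case False
    thus ?thesis unfolding sa using Kf s1 s2 by linarith
  qed
  thus ?thesis using d eT unfolding fh_def by linarith
qed

end
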